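(* Let $X$ be a real Banach space with $\dim X \ge 2$. Then $0 \le S_P(X) \le \tfrac12$.
   Context: For a real Banach space $X$ with unit sphere $S_X=\{x:\|x\|=1\}$, the P-angle between nonzero vectors $u,v$ is $\operatorname{ang}_P(u,v)=\arccos\frac{\|u\|^2+\|v\|^2-\|u-v\|^2}{2\|u\|\|v\|}$. The P-angle constant is $S_P(X)=\sup\{\cos\operatorname{ang}_P(x+y,x-y): x,y\in S_X,\ x\neq \pm y\}$; explicitly, $\cos\operatorname{ang}_P(x+y,x-y)=\frac{\|x+y\|^2+\|x-y\|^2-4}{2\|x+y\|\,\|x-y\|}$ for $x,y\in S_X$, $x\ne\pm y$. *)

theory Defs
  imports "HOL-Analysis.Analysis"
begin

definition ang_P :: "'a::real_normed_vector \<Rightarrow> 'a \<Rightarrow> real" where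
  "ang_P u v = arccos ((norm u ^ 2 + norm v ^ 2 - norm (u - v) ^ 2) / (2 * norm u * norm v))"

definition S_P :: "'a::real_normed_vector itself \<Rightarrow> real" where
  "S_P TYPE('a) = Sup {cos (ang_P (x + y) (x - y)) | x y :: 'a.
       norm x = 1 \<and> norm y = 1 \<and> x \<noteq> y \<and> x \<noteq> - y}"

end

theory Submission
  imports Defs
begin

lemma val_bounds:
  fixes x y :: "'a::real_normed_vector"
  assumes "norm x = 1" "norm y = 1" "x \<noteq> y" "x \<noteq> - y"
  shows "cos (ang_P (x + y) (x - y)) = (norm (x+y)^2 + norm (x-y)^2 - 4) / (2 * norm (x+y) * norm (x-y))"
    and "(norm (x+y)^2 + norm (x-y)^2 - 4) / (2 * norm (x+y) * norm (x-y)) \<le> 1/2"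
proof -
  define a where "a = norm (x+y)"
  define b where "b = norm (x-y)"
  have a0: "a > 0" using assms(4) unfolding a_def by (auto simp: add_eq_0_iff)
  have b0: "b > 0" using assms(3) unfolding b_def by simp
  have a2: "a \<le> 2" unfolding a_def using norm_triangle_ineq[of x y] assms by simp
  have b2: "b \<le> 2" unfolding b_def using norm_triangle_ineq4[of x y] assms by simp
  have ab: "a + b \<ge> 2"
  proof -
    have "norm ((x+y) + (x-y)) \<le> a + b" unfolding a_def b_def by (rule norm_triangle_ineq)
    moreover have "(x+y)+(x-y) = 2 *\<^sub>R x" by (simp add: scaleR_2)
    ultimately show ?thesis using assms by simp
  qed
  have n2: "norm ((x+y) - (x-y)) = 2"
  proof -
    have "(x+y) - (x-y) = 2 *\<^sub>R y" by (simp add: scaleR_2)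
    thus ?thesis using assms by simp
  qed
  have up: "a^2 + b^2 - 4 \<le> a*b"
  proof -
    have "(2-a)*(2-b) \<ge> 0" using a2 b2 by simp
    moreover have "a^2 \<le> 2*a" using a2 a0 by (simp add: power2_eq_square)
    moreover have "b^2 \<le> 2*b" using b2 b0 by (simp add: power2_eq_square)
    ultimately show ?thesis by (simp add: algebra_simps)
  qed
  have lo: "a^2 + b^2 - 4 \<ge> - (2*a*b)"
  proof -
    have "(a+b)^2 \<ge> 2^2" using ab a0 b0 by (intro power_mono) auto
    thus ?thesis by (simp add: power2_eq_square algebra_simps)
  qed
  have pos: "2*a*b > 0" using a0 b0 by simp
  have hu: "(a^2 + b^2 - 4) / (2*a*b) \<le> 1/2" using up pos by (simp add: field_simps)
  have hl: "(a^2 + b^2 - 4) / (2*a*b) \<ge> -1" using lo pos by (simp add: field_simps)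
  show "cos (ang_P (x + y) (x - y)) = (norm (x+y)^2 + norm (x-y)^2 - 4) / (2 * norm (x+y) * norm (x-y))"
  proof -
    have "(a^2 + b^2 - 4) / (2*a*b) \<le> 1" using hu by linarith
    hence "cos (arccos ((a^2 + b^2 - 4) / (2*a*b))) = (a^2 + b^2 - 4) / (2*a*b)"
      using hl by (intro cos_arccos) auto
    moreover have "(a^2 + b^2 - 2^2) / (2*a*b) = (a^2 + b^2 - 4) / (2*a*b)" by simp
    ultimately show ?thesis unfolding ang_P_def n2 a_def b_def by simp
  qed
  show "(norm (x+y)^2 + norm (x-y)^2 - 4) / (2 * norm (x+y) * norm (x-y)) \<le> 1/2"
    using hu by (simp add: a_def b_def)
qed

lemma exists_isosceles:
  fixes u v :: "'a::real_normed_vector"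
  assumes "u \<noteq> v" "independent {u, v}"
  shows "\<exists>x y::'a. norm x = 1 \<and> norm y = 1 \<and> norm (x+y) = norm (x-y)"
proof -
  have u0: "u \<noteq> 0" "v \<noteq> 0" using assms(2) dependent_zero[of "{u,v}"] by blast+
  have nsp: "u \<notin> span {v}" using assms independent_insert[of u "{v}"] by auto
  define w where "w t = cos (pi*t) *\<^sub>R v + sin (pi*t) *\<^sub>R u" for t
  have w0: "w t \<noteq> 0" for t
  proof
    assume h: "w t = 0"
    show False
    proof (cases "sin (pi*t) = 0")
      case True
      then have "cos (pi*t) \<noteq> 0" using sin_cos_squared_add[of "pi*t"] by auto
      with h True u0 show False by (simp add: w_def)
    next
      case False
      have "sin (pi*t) *\<^sub>R u = - (cos (pi*t) *\<^sub>R v)"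
        using h unfolding w_def by (metis add.commute eq_neg_iff_add_eq_0)
      hence "(1/sin (pi*t)) *\<^sub>R (sin (pi*t) *\<^sub>R u) = (1/sin (pi*t)) *\<^sub>R (- (cos (pi*t) *\<^sub>R v))"
        by simp
      hence "u = (- cos (pi*t) / sin (pi*t)) *\<^sub>R v" using False by simp
      hence "u \<in> span {v}" by (metis span_base span_scale insertI1)
      with nsp show False by simp
    qed
  qed
  define x where "x = u /\<^sub>R norm u"
  have nx: "norm x = 1" using u0 by (simp add: x_def)
  define y where "y t = w t /\<^sub>R norm (w t)" for t
  have ny: "norm (y t) = 1" for t using w0 by (simp add: y_def)
  define h where "h t = norm (x + y t) - norm (x - y t)" for t
  have cw: "continuous_on {0..1} w" unfolding w_def by (intro continuous_intros)
  have cy: "continuous_on {0..1} y" unfolding y_def using w0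
    by (intro continuous_intros cw) auto
  have ch: "continuous_on {0..1} h" unfolding h_def by (intro continuous_intros cy)
  have y1: "y 1 = - y 0" by (simp add: y_def w_def)
  have h1: "h 1 = - h 0" unfolding h_def y1 by (simp add: norm_minus_commute)
  have "\<exists>t\<in>{0..1}. h t = 0"
  proof (cases "h 0 \<le> 0")
    case True
    then show ?thesis using IVT'[of h 0 0 1] ch h1 by auto
  next
    case False
    then show ?thesis using IVT2'[of h 1 0 0] ch h1 by auto
  qed
  then obtain t where "h t = 0" by auto
  hence "norm (x + y t) = norm (x - y t)" unfolding h_def by simp
  thus ?thesis using nx ny[of t] by blast
qed

theorem proposition3p3:
  assumes "\<exists>u v :: 'a::banach. u \<noteq> v \<and> independent {u, v}"
  shows "0 \<le> S_P TYPE('a) \<and> S_P TYPE('a) \<le> 1 / 2"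
proof -
  define S where "S = {cos (ang_P (x + y) (x - y)) | x y :: 'a.
       norm x = 1 \<and> norm y = 1 \<and> x \<noteq> y \<and> x \<noteq> - y}"
  have SP: "S_P TYPE('a) = Sup S" unfolding S_def S_P_def by simp
  have bd: "\<forall>s\<in>S. s \<le> 1/2"
  proof
    fix s assume "s \<in> S"
    then obtain x y :: 'a where h: "s = cos (ang_P (x + y) (x - y))" "norm x = 1" "norm y = 1"
       "x \<noteq> y" "x \<noteq> - y" unfolding S_def by blast
    show "s \<le> 1/2" unfolding h(1) val_bounds(1)[OF h(2-5)] by (rule val_bounds(2)[OF h(2-5)])
  qed
  obtain u v :: 'a where uv: "u \<noteq> v" "independent {u, v}" using assms by blast
  obtain x y :: 'a where xy: "norm x = 1" "norm y = 1" "norm (x+y) = norm (x-y)"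
    using exists_isosceles[OF uv] by blast
  define a where "a = norm (x+y)"
  have ab: "norm (x-y) = a" using xy(3) unfolding a_def by (rule sym)
  have ab2: "2 \<le> 2*a"
  proof -
    have "norm ((x+y) + (x-y)) \<le> norm (x+y) + norm (x-y)" by (rule norm_triangle_ineq)
    moreover have "(x+y)+(x-y) = 2 *\<^sub>R x" by (simp add: scaleR_2)
    ultimately have "2 \<le> norm (x+y) + norm (x-y)" using xy(1) by simp
    thus ?thesis using ab unfolding a_def by simp
  qed
  have a0: "a > 0" using ab2 by simp
  have xny: "x \<noteq> y" "x \<noteq> -y"
  proof -
    show "x \<noteq> y" proof assume "x = y" hence "norm (x-y) = 0" by simp
      thus False using ab a0 by simp qed
    show "x \<noteq> -y" proof assume "x = -y" hence "norm (x+y) = 0" by simp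
      thus False using a_def a0 by simp qed
  qed
  have "\<exists>s\<in>S. s \<ge> 0"
  proof (cases "a^2 \<ge> 2")
    case True
    have "cos (ang_P (x + y) (x - y)) \<in> S" unfolding S_def using xy xny by blast
    moreover have "cos (ang_P (x + y) (x - y)) = (2*a^2 - 4) / (2*a*a)"
      using val_bounds(1)[OF xy(1,2) xny] unfolding ab a_def[symmetric] by (simp add: power2_eq_square)
    moreover have "(2*a^2 - 4) / (2*a*a) \<ge> 0" using True a0 by (intro divide_nonneg_pos) auto
    ultimately show ?thesis by metis
  next
    case False
    define x' where "x' = (x+y) /\<^sub>R a"
    define y' where "y' = (x-y) /\<^sub>R a"
    have n1: "norm x' = 1" "norm y' = 1" using a0 ab a_def[symmetric] by (auto simp: x'_def y'_def)
    have e1: "x' + y' = (2/a) *\<^sub>R x"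
    proof -
      have "x' + y' = inverse a *\<^sub>R ((x+y) + (x-y))" unfolding x'_def y'_def
        by (rule scaleR_right_diff_distrib[symmetric] scaleR_right_distrib[symmetric])
      also have "(x+y) + (x-y) = 2 *\<^sub>R x" by (simp add: scaleR_2)
      finally show ?thesis by (simp add: divide_inverse mult.commute)
    qed
    have e2: "x' - y' = (2/a) *\<^sub>R y"
    proof -
      have "x' - y' = inverse a *\<^sub>R ((x+y) - (x-y))" unfolding x'_def y'_def
        by (rule scaleR_right_diff_distrib[symmetric] scaleR_right_distrib[symmetric])
      also have "(x+y) - (x-y) = 2 *\<^sub>R y" by (simp add: scaleR_2)
      finally show ?thesis by (simp add: divide_inverse mult.commute)
    qed
    have m1: "norm (x'+y') = 2/a" "norm (x'-y') = 2/a" using e1 e2 xy(1,2) a0 by auto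
    have xny': "x' \<noteq> y'" "x' \<noteq> -y'" using m1 a0 by (auto simp: add_eq_0_iff)
    have "cos (ang_P (x' + y') (x' - y')) \<in> S" unfolding S_def using n1 xny' by blast
    moreover have "cos (ang_P (x' + y') (x' - y')) = (2*(2/a)^2 - 4) / (2*(2/a)*(2/a))"
      using val_bounds(1)[OF n1 xny'] m1 by (simp add: power2_eq_square)
    moreover have "(2*(2/a)^2 - 4) / (2*(2/a)*(2/a)) \<ge> 0"
    proof -
      have "a^2 * 2 \<le> 4" using False by linarith
      hence "2*(2/a)^2 - 4 \<ge> 0" using a0 by (simp add: field_simps power2_eq_square)
      thus ?thesis using a0 by simp
    qed
    ultimately show ?thesis by metis
  qed
  then obtain s where s: "s \<in> S" "s \<ge> 0" by auto
  have bdd: "bdd_above S" using bd by (intro bdd_aboveI[of S "1/2"]) blast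
  have "s \<le> Sup S" using cSup_upper[OF s(1) bdd] .
  moreover have "Sup S \<le> 1/2" using bd s(1) by (intro cSup_least) auto
  ultimately show ?thesis using SP s by simp
qed

end
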